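(* Let $\mathbf{L}\in Q^2(\mathbb{D}^2)$. An analytic function $F\colon\mathbb{D}^2\to\mathbb{C}$ has bounded $\mathbf{L}$-index in joint variables if and only if there exist $R=(r_1,r_2)\in(0,\beta]^2$, $n_0\in\mathbb{Z}_+$ and $p_0>1$ such that for each $z^0\in\mathbb{D}^2$ there is $(k_1^0,k_2^0)\in\mathbb{Z}_+^2$ with $k_1^0+k_2^0\le n_0$ and $$\max\left\{\frac{|F^{(k_1,k_2)}(z)|}{k_1!k_2!\,l_1^{k_1}(z)l_2^{k_2}(z)}: k_1+k_2\le n_0,\ z\in\mathbb{D}^2\Big[z^0,\frac{R}{\mathbf{L}(z^0)}\Big]\right\}\le \frac{p_0}{k_1^0!k_2^0!}\,\frac{|F^{(k_1^0,k_2^0)}(z^0)|}{l_1^{k_1^0}(z^0)\,l_2^{k_2^0}(z^0)}.$$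
   Context: $\mathbb{D}^2=\{(z_1,z_2)\in\mathbb{C}^2:|z_1|<1,|z_2|<1\}$, $\mathbb{Z}_+=\{0,1,2,\dots\}$, $\mathbb{R}_+=[0,\infty)$. A constant $\beta>1$ is fixed. $\mathbf{L}(z)=(l_1(z),l_2(z))$, where each $l_j\colon\mathbb{D}^2\to\mathbb{R}_+$ is continuous and satisfies $l_j(z_1,z_2)>\beta/(1-|z_j|)$ for all $(z_1,z_2)\in\mathbb{D}^2$, $j=1,2$. For $z^0\in\mathbb{C}^2$ and $R=(r_1,r_2)\in\mathbb{R}_+^2$: $\mathbb{D}^2[z^0,R]=\{z:|z_j-z_j^0|\le r_j,\ j=1,2\}$ and $\frac{R}{\mathbf{L}(z^0)}=\big(\frac{r_1}{l_1(z^0)},\frac{r_2}{l_2(z^0)}\big)$. $F^{(p,q)}=\frac{\partial^{p+q}F}{\partial z_1^p\partial z_2^q}$. An analytic $F\colon\mathbb{D}^2\to\mathbb{C}$ has bounded $\mathbf{L}$-index in joint variables if there is $n_0\in\mathbb{Z}_+$ such that for all $z\in\mathbb{D}^2$ and all $(p_1,p_2)\in\mathbb{Z}_+^2$: $\frac{|F^{(p_1,p_2)}(z)|}{p_1!p_2!\,l_1^{p_1}(z)l_2^{p_2}(z)}\le\max\{\frac{|F^{(k_1,k_2)}(z)|}{k_1!k_2!\,l_1^{k_1}(z)l_2^{k_2}(z)}:0\le k_1+k_2\le n_0\}$. $Q^2(\mathbb{D}^2)$ is the class of such $\mathbf{L}$ for which, for all $R=(r_1,r_2)\in[0,\beta]^2$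 and $j=1,2$, $0<\lambda_{1,j}(R)\le\lambda_{2,j}(R)<\infty$, where $\lambda_{1,j}(R)=\inf_{z^0\in\mathbb{D}^2}\inf\{l_j(z)/l_j(z^0): z\in\mathbb{D}^2[z^0,R/\mathbf{L}(z^0)]\}$ and $\lambda_{2,j}(R)=\sup_{z^0\in\mathbb{D}^2}\sup\{l_j(z)/l_j(z^0): z\in\mathbb{D}^2[z^0,R/\mathbf{L}(z^0)]\}$. *)

theory Defs
  imports "HOL-Analysis.Analysis"
begin

definition bidisc :: "(complex \<times> complex) set" where
  "bidisc = {z. cmod (fst z) < 1 \<and> cmod (snd z) < 1}"

definition cpolydisc :: "complex \<times> complex \<Rightarrow> real \<times> real \<Rightarrow> (complex \<times> complex) set" where
  "cpolydisc z0 R = {z. cmod (fst z - fst z0) \<le> fst R \<and> cmod (snd z - snd z0) \<le> snd R}"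

text \<open>Analyticity of a function of two complex variables on a set S:
  locally the sum of an (absolutely, i.e. unconditionally) convergent double power series.\<close>
definition analytic2_on :: "(complex \<times> complex \<Rightarrow> complex) \<Rightarrow> (complex \<times> complex) set \<Rightarrow> bool" where
  "analytic2_on F S \<longleftrightarrow> (\<forall>w\<in>S. \<exists>r>0. \<exists>a :: nat \<Rightarrow> nat \<Rightarrow> complex.
     \<forall>z. cmod (fst z - fst w) < r \<and> cmod (snd z - snd w) < r \<longrightarrow>
       ((\<lambda>(m, n). a m n * (fst z - fst w) ^ m * (snd z - snd w) ^ n) has_sum F z) UNIV)"

definition pderiv2 :: "(complex \<times> complex \<Rightarrow> complex) \<Rightarrow> nat \<Rightarrow> nat \<Rightarrow> complex \<times> complex \<Rightarrow> complex" where
  "pderiv2 F p q z = (deriv ^^ p) (\<lambda>w. (deriv ^^ q) (\<lambda>u. F (w, u)) (snd z)) (fst z)"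

definition Lnorm :: "(complex \<times> complex \<Rightarrow> complex) \<Rightarrow> (complex \<times> complex \<Rightarrow> real)
     \<Rightarrow> (complex \<times> complex \<Rightarrow> real) \<Rightarrow> nat \<Rightarrow> nat \<Rightarrow> complex \<times> complex \<Rightarrow> real" where
  "Lnorm F l1 l2 p q z = cmod (pderiv2 F p q z) / (fact p * fact q * l1 z ^ p * l2 z ^ q)"

definition bounded_L_index_joint :: "(complex \<times> complex \<Rightarrow> complex) \<Rightarrow> (complex \<times> complex \<Rightarrow> real)
     \<Rightarrow> (complex \<times> complex \<Rightarrow> real) \<Rightarrow> bool" where
  "bounded_L_index_joint F l1 l2 \<longleftrightarrow> (\<exists>n0::nat. \<forall>z\<in>bidisc. \<forall>p1 p2.
     Lnorm F l1 l2 p1 p2 z \<le> Max {Lnorm F l1 l2 k1 k2 z | k1 k2. k1 + k2 \<le> n0})"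

definition lambda1 :: "(complex \<times> complex \<Rightarrow> real) \<Rightarrow> (complex \<times> complex \<Rightarrow> real)
     \<Rightarrow> (complex \<times> complex \<Rightarrow> real) \<Rightarrow> real \<times> real \<Rightarrow> ereal" where
  "lambda1 l1 l2 l R = (INF z0\<in>bidisc. INF z\<in>bidisc \<inter> cpolydisc z0 (fst R / l1 z0, snd R / l2 z0).
       ereal (l z / l z0))"

definition lambda2 :: "(complex \<times> complex \<Rightarrow> real) \<Rightarrow> (complex \<times> complex \<Rightarrow> real)
     \<Rightarrow> (complex \<times> complex \<Rightarrow> real) \<Rightarrow> real \<times> real \<Rightarrow> ereal" where
  "lambda2 l1 l2 l R = (SUP z0\<in>bidisc. SUP z\<in>bidisc \<inter> cpolydisc z0 (fst R / l1 z0, snd R / l2 z0).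
       ereal (l z / l z0))"

definition Q2 :: "real \<Rightarrow> (complex \<times> complex \<Rightarrow> real) \<Rightarrow> (complex \<times> complex \<Rightarrow> real) \<Rightarrow> bool" where
  "Q2 \<beta> l1 l2 \<longleftrightarrow> (\<forall>r1 r2. 0 \<le> r1 \<and> r1 \<le> \<beta> \<and> 0 \<le> r2 \<and> r2 \<le> \<beta> \<longrightarrow>
     (\<forall>l\<in>{l1, l2}. 0 < lambda1 l1 l2 l (r1, r2) \<and> lambda1 l1 l2 l (r1, r2) \<le> lambda2 l1 l2 l (r1, r2)
        \<and> lambda2 l1 l2 l (r1, r2) < \<infinity>))"

end

theory Submission
  imports Defs "HOL-Complex_Analysis.Complex_Analysis"
begin


lemma L0:
  fixes d :: "nat \<Rightarrow> complex"
  assumes s: "s > 0" and S: "\<And>x. x \<in> ball a s \<Longrightarrow> (\<lambda>n. d n * (x - a)^n) sums f x"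
  shows "f holomorphic_on ball a s" "(deriv ^^ k) f a = fact k * d k"
proof -
  define D where "D = Abs_fps d"
  have nth: "fps_nth D = d" by (rule ext) (simp add: D_def)
  have rad: "fps_conv_radius D \<ge> ereal s"
    unfolding fps_conv_radius_def nth
  proof (rule conv_radius_geI_ex')
    fix r :: real assume r: "0 < r" "ereal r < ereal s"
    have "a + of_real r \<in> ball a s" using r by (simp add: dist_norm)
    from S[OF this] show "summable (\<lambda>n. d n * of_real r ^ n)" by (simp add: sums_iff)
  qed
  have rad': "\<And>y::complex. norm y < s \<Longrightarrow> ereal (norm y) < fps_conv_radius D"
  proof -
    fix y :: complex assume "norm y < s"
    hence "ereal (norm y) < ereal s" by simp
    thus "ereal (norm y) < fps_conv_radius D" using rad by (rule less_le_trans)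
  qed
  have ev: "\<And>x. x \<in> ball a s \<Longrightarrow> eval_fps D (x - a) = f x"
  proof -
    fix x assume x: "x \<in> ball a s"
    have "norm (x - a) < fps_conv_radius D"
      using x rad' by (auto simp: dist_norm norm_minus_commute)
    from sums_eval_fps[OF this] S[OF x] show "eval_fps D (x - a) = f x"
      by (simp add: nth sums_unique2)
  qed
  have h1: "(\<lambda>x. eval_fps D (x - a)) holomorphic_on ball a s"
  proof -
    have "(\<lambda>x. x - a) ` ball a s \<subseteq> eball 0 (fps_conv_radius D)"
      using rad' by (auto simp: dist_norm norm_minus_commute)
    hence hD: "eval_fps D holomorphic_on ((\<lambda>x. x - a) ` ball a s)"
      by (rule holomorphic_on_eval_fps)
    have "(\<lambda>x. x - a) holomorphic_on ball a s" by (intro holomorphic_intros)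
    from holomorphic_on_compose[OF this hD]
    have "(eval_fps D \<circ> (\<lambda>x. x - a)) holomorphic_on ball a s" .
    thus ?thesis by (simp add: o_def)
  qed
  show "f holomorphic_on ball a s"
    using h1 by (rule holomorphic_transform) (use ev in auto)
  have "(deriv ^^ k) f a = (deriv ^^ k) (f \<circ> (\<lambda>x. a + x)) 0"
    by (rule higher_deriv_shift_0)
  also have "\<dots> = (deriv ^^ k) (eval_fps D) 0"
  proof (rule higher_deriv_cong_ev)
    have "eventually (\<lambda>x. x \<in> ball 0 s) (nhds (0::complex))"
      using s by (intro eventually_nhds_in_open) auto
    thus "eventually (\<lambda>x. (f \<circ> (\<lambda>x. a + x)) x = eval_fps D x) (nhds 0)"
      by eventually_elim (use ev[of "a + _"] in \<open>auto simp: dist_norm\<close>)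
  qed simp
  also have "\<dots> = fact k * d k"
  proof -
    have "0 < fps_conv_radius D" using rad' [of 0] s by (simp add: zero_ereal_def)
    thus ?thesis using fps_nth_conv_deriv[of D k] by (simp add: nth field_simps)
  qed
  finally show "(deriv ^^ k) f a = fact k * d k" .
qed

lemma fubini_nat2:
  fixes g :: "nat \<times> nat \<Rightarrow> complex"
  assumes "(g has_sum S) UNIV"
  shows "\<And>n. ((\<lambda>m. g (m, n)) has_sum (\<Sum>\<^sub>\<infinity>m. g (m, n))) UNIV"
    and "(\<lambda>n. \<Sum>\<^sub>\<infinity>m. g (m, n)) sums S"
proof -
  have sm: "g summable_on UNIV" using assms by (rule has_sum_imp_summable)
  show inner: "((\<lambda>m. g (m, n)) has_sum (\<Sum>\<^sub>\<infinity>m. g (m, n))) UNIV" for n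
  proof -
    have "g summable_on ((\<lambda>m. (m, n)) ` UNIV)"
      by (rule summable_on_subset_banach[OF sm]) auto
    hence "(g \<circ> (\<lambda>m. (m, n))) summable_on UNIV"
      by (subst (asm) summable_on_reindex) (auto simp: inj_on_def)
    thus ?thesis by (simp add: o_def)
  qed
  have "((\<lambda>(x,y). g (y,x)) has_sum S) (UNIV \<times> UNIV)"
    using assms has_sum_swap[where f=g and A="UNIV::nat set" and B="UNIV::nat set"] by simp
  hence "((\<lambda>n. \<Sum>\<^sub>\<infinity>m. g (m, n)) has_sum S) UNIV"
    by (rule has_sum_Sigma'[where B = "\<lambda>_. UNIV"]) (use inner in auto)
  thus "(\<lambda>n. \<Sum>\<^sub>\<infinity>m. g (m, n)) sums S" by (rule has_sum_imp_sums)
qed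




lemma local_facts:
  assumes F_an: "analytic2_on F bidisc" and ab: "(a,b) \<in> bidisc"
  obtains r where "r > 0"
    and "\<And>w. w \<in> ball a r \<Longrightarrow> (\<lambda>u. F(w,u)) holomorphic_on ball b r"
    and "\<And>u. u \<in> ball b r \<Longrightarrow> (\<lambda>w. F(w,u)) holomorphic_on ball a r"
    and "\<And>q. (\<lambda>w. (deriv^^q)(\<lambda>u. F(w,u)) b) holomorphic_on ball a r"
    and "\<And>p. (\<lambda>u. (deriv^^p)(\<lambda>w. F(w,u)) a) holomorphic_on ball b r"
    and "\<And>p q. (deriv^^q)(\<lambda>u. (deriv^^p)(\<lambda>w. F(w,u)) a) b = pderiv2 F p q (a,b)"
proof -
  from F_an ab obtain r c where r: "r > 0" and
    HS0: "\<And>z. cmod (fst z - a) < r \<and> cmod (snd z - b) < r \<Longrightarrow>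
       ((\<lambda>(m, n). c m n * (fst z - a) ^ m * (snd z - b) ^ n) has_sum F z) UNIV"
    unfolding analytic2_on_def by fastforce
  have HS: "((\<lambda>(m, n). c m n * (w - a) ^ m * (u - b) ^ n) has_sum F (w,u)) UNIV"
    if "w \<in> ball a r" "u \<in> ball b r" for w u
    using HS0[of "(w,u)"] that by (simp add: dist_norm norm_minus_commute)
  define dd where "dd n w = (\<Sum>\<^sub>\<infinity>m. c m n * (w - a)^m)" for n w
  define ee where "ee m u = (\<Sum>\<^sub>\<infinity>n. c m n * (u - b)^n)" for m u
  have S1: "(\<lambda>n. dd n w * (u - b)^n) sums F(w,u)" if "w \<in> ball a r" "u \<in> ball b r" for w u
  proof -
    from fubini_nat2(2)[OF HS[OF that]]
    have "(\<lambda>n. \<Sum>\<^sub>\<infinity>m. c m n * (w - a) ^ m * (u - b) ^ n) sums F (w, u)" by simp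
    thus ?thesis by (simp add: dd_def infsum_cmult_left')
  qed
  have HS': "((\<lambda>(n, m). c m n * (w - a) ^ m * (u - b) ^ n) has_sum F (w,u)) UNIV"
    if "w \<in> ball a r" "u \<in> ball b r" for w u
    using HS[OF that] has_sum_swap[where f="\<lambda>(m, n). c m n * (w - a) ^ m * (u - b) ^ n"
        and A="UNIV::nat set" and B="UNIV::nat set"] by simp
  have S2: "(\<lambda>m. ee m u * (w - a)^m) sums F(w,u)" if "w \<in> ball a r" "u \<in> ball b r" for w u
  proof -
    from fubini_nat2(2)[OF HS'[OF that]]
    have "(\<lambda>m. \<Sum>\<^sub>\<infinity>n. c m n * (w - a) ^ m * (u - b) ^ n) sums F (w, u)" by simp
    moreover have "(\<Sum>\<^sub>\<infinity>n. c m n * (w - a) ^ m * (u - b) ^ n) = ee m u * (w - a)^m" for m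
    proof -
      have "(\<Sum>\<^sub>\<infinity>n. c m n * (w - a) ^ m * (u - b) ^ n) = (\<Sum>\<^sub>\<infinity>n. (c m n * (u - b) ^ n) * (w - a) ^ m)"
        by (simp add: algebra_simps)
      thus ?thesis by (simp add: ee_def infsum_cmult_left')
    qed
    ultimately show ?thesis by simp
  qed
  have bh: "b + of_real (r/2) \<in> ball b r" "a + of_real (r/2) \<in> ball a r" using r by (auto simp: dist_norm)
  have ne: "(of_real (r/2) :: complex) ^ n \<noteq> 0" for n using r by simp
  have S3: "(\<lambda>m. c m n * (w - a)^m) sums dd n w" if "w \<in> ball a r" for w n
  proof -
    from fubini_nat2(1)[OF HS[OF that bh(1)], of n]
    have "(\<lambda>m. c m n * (w - a) ^ m * (of_real (r/2)) ^ n) summable_on UNIV"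
      by (auto dest: has_sum_imp_summable)
    hence "(\<lambda>m. c m n * (w - a) ^ m) summable_on UNIV"
      using summable_on_cmult_left'[OF ne[of n]] by blast
    hence "((\<lambda>m. c m n * (w - a) ^ m) has_sum dd n w) UNIV"
      unfolding dd_def by (rule has_sum_infsum)
    thus ?thesis by (rule has_sum_imp_sums)
  qed
  have S4: "(\<lambda>n. c m n * (u - b)^n) sums ee m u" if "u \<in> ball b r" for u m
  proof -
    from fubini_nat2(1)[OF HS'[OF bh(2) that], of m]
    have "(\<lambda>n. c m n * (u - b) ^ n * (of_real (r/2)) ^ m) summable_on UNIV"
      by (auto dest: has_sum_imp_summable simp: algebra_simps)
    hence "(\<lambda>n. c m n * (u - b) ^ n) summable_on UNIV"
      using summable_on_cmult_left'[OF ne[of m]] by blast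
    hence "((\<lambda>n. c m n * (u - b) ^ n) has_sum ee m u) UNIV"
      unfolding ee_def by (rule has_sum_infsum)
    thus ?thesis by (rule has_sum_imp_sums)
  qed
  have Hu: "(\<lambda>u. F(w,u)) holomorphic_on ball b r" "(deriv^^q)(\<lambda>u. F(w,u)) b = fact q * dd q w"
    if "w \<in> ball a r" for w q
    using L0[of r b "\<lambda>n. dd n w" "\<lambda>u. F(w,u)"] S1[OF that] r by auto
  have Hw: "(\<lambda>w. F(w,u)) holomorphic_on ball a r" "(deriv^^p)(\<lambda>w. F(w,u)) a = fact p * ee p u"
    if "u \<in> ball b r" for u p
    using L0[of r a "\<lambda>n. ee n u" "\<lambda>w. F(w,u)"] S2[OF _ that] r by auto
  have Sq: "(\<lambda>m. (fact q * c m q) * (w - a)^m) sums (deriv^^q)(\<lambda>u. F(w,u)) b"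
    if "w \<in> ball a r" for w q
    using sums_mult[OF S3[OF that, of q], of "fact q"] Hu(2)[OF that, of q] by (simp add: algebra_simps)
  have Sp: "(\<lambda>n. (fact p * c p n) * (u - b)^n) sums (deriv^^p)(\<lambda>w. F(w,u)) a"
    if "u \<in> ball b r" for u p
    using sums_mult[OF S4[OF that, of p], of "fact p"] Hw(2)[OF that, of p] by (simp add: algebra_simps)
  have Lq: "(\<lambda>w. (deriv^^q)(\<lambda>u. F(w,u)) b) holomorphic_on ball a r"
           "(deriv^^p)(\<lambda>w. (deriv^^q)(\<lambda>u. F(w,u)) b) a = fact p * (fact q * c p q)" for p q
    using L0[of r a "\<lambda>m. fact q * c m q" "\<lambda>w. (deriv^^q)(\<lambda>u. F(w,u)) b"] Sq r by auto
  have Lp: "(\<lambda>u. (deriv^^p)(\<lambda>w. F(w,u)) a) holomorphic_on ball b r"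
           "(deriv^^q)(\<lambda>u. (deriv^^p)(\<lambda>w. F(w,u)) a) b = fact q * (fact p * c p q)" for p q
    using L0[of r b "\<lambda>n. fact p * c p n" "\<lambda>u. (deriv^^p)(\<lambda>w. F(w,u)) a"] Sp r by auto
  show ?thesis
  proof (rule that[OF r])
    show "\<And>w. w \<in> ball a r \<Longrightarrow> (\<lambda>u. F(w,u)) holomorphic_on ball b r" using Hu by blast
    show "\<And>u. u \<in> ball b r \<Longrightarrow> (\<lambda>w. F(w,u)) holomorphic_on ball a r" using Hw by blast
    show "\<And>q. (\<lambda>w. (deriv^^q)(\<lambda>u. F(w,u)) b) holomorphic_on ball a r" using Lq by blast
    show "\<And>p. (\<lambda>u. (deriv^^p)(\<lambda>w. F(w,u)) a) holomorphic_on ball b r" using Lp by blast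
    show "\<And>p q. (deriv^^q)(\<lambda>u. (deriv^^p)(\<lambda>w. F(w,u)) a) b = pderiv2 F p q (a,b)"
      using Lp(2) Lq(2) by (simp add: pderiv2_def)
  qed
qed




lemma hol_local:
  assumes "open S" "\<And>x. x \<in> S \<Longrightarrow> \<exists>r>0. f holomorphic_on ball x r"
  shows "f holomorphic_on S"
proof -
  have "\<exists>f'. (f has_field_derivative f') (at x)" if "x \<in> S" for x
  proof -
    from assms(2)[OF that] obtain r where "r > 0" "f holomorphic_on ball x r" by blast
    hence "f field_differentiable at x"
      by (intro holomorphic_on_imp_differentiable_at[of f "ball x r"]) auto
    thus ?thesis by (auto simp: field_differentiable_def)
  qed
  thus ?thesis using assms(1) by (simp add: holomorphic_on_open)
qed

lemma bidisc_iff: "(w,u) \<in> bidisc \<longleftrightarrow> cmod w < 1 \<and> cmod u < 1"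
  by (simp add: bidisc_def)

context
  fixes F :: "complex \<times> complex \<Rightarrow> complex"
  assumes F_an: "analytic2_on F bidisc"
begin

lemma G2: "cmod u < 1 \<Longrightarrow> (\<lambda>w. (deriv^^q)(\<lambda>u'. F(w,u')) u) holomorphic_on ball 0 1"
proof (rule hol_local)
  fix x :: complex assume "cmod u < 1" "x \<in> ball 0 1"
  hence "(x,u) \<in> bidisc" by (simp add: bidisc_iff)
  from local_facts[OF F_an this] show "\<exists>r>0. (\<lambda>w. (deriv^^q)(\<lambda>u'. F(w,u')) u) holomorphic_on ball x r"
    by metis
qed auto

lemma G4: "cmod w < 1 \<Longrightarrow> (\<lambda>u. (deriv^^p)(\<lambda>w'. F(w',u)) w) holomorphic_on ball 0 1"
proof (rule hol_local)
  fix x :: complex assume "cmod w < 1" "x \<in> ball 0 1"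
  hence "(w,x) \<in> bidisc" by (simp add: bidisc_iff)
  from local_facts[OF F_an this] show "\<exists>r>0. (\<lambda>u. (deriv^^p)(\<lambda>w'. F(w',u)) w) holomorphic_on ball x r"
    by metis
qed auto

lemma G3: "(a,b) \<in> bidisc \<Longrightarrow> (deriv^^q)(\<lambda>u. (deriv^^p)(\<lambda>w. F(w,u)) a) b = pderiv2 F p q (a,b)"
  by (auto elim!: local_facts[OF F_an, of a b])

lemma G1u: "cmod w < 1 \<Longrightarrow> (\<lambda>u. F(w,u)) holomorphic_on ball 0 1"
  using G4[of w 0] by simp

lemma T1:
  assumes a: "cmod a < 1" and z2: "cmod z2 < 1" and z1: "z1 \<in> ball a (1 - cmod a)"
  shows "(\<lambda>j. pderiv2 F (k1+j) k2 (a,z2) / fact j * (z1-a)^j) sums pderiv2 F k1 k2 (z1,z2)"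
proof -
  define g where "g = (\<lambda>w. (deriv^^k2)(\<lambda>u. F(w,u)) z2)"
  have fg: "(\<lambda>w. pderiv2 F k1 k2 (w,z2)) = (deriv^^k1) g"
    by (rule ext) (simp add: pderiv2_def g_def)
  have gh: "g holomorphic_on ball 0 1" unfolding g_def by (rule G2[OF z2])
  have sub: "ball a (1 - cmod a) \<subseteq> ball 0 1"
    by (auto simp: dist_norm) (metis norm_triangle_sub add.commute less_diff_eq order_le_less_trans norm_minus_commute)
  have "(\<lambda>w. pderiv2 F k1 k2 (w,z2)) holomorphic_on ball a (1 - cmod a)"
    unfolding fg by (rule holomorphic_on_subset[OF holomorphic_higher_deriv[OF gh] sub]) simp
  from holomorphic_power_series[OF this z1]
  have "(\<lambda>n. (deriv ^^ n) (\<lambda>w. pderiv2 F k1 k2 (w,z2)) a / fact n * (z1 - a) ^ n) sums pderiv2 F k1 k2 (z1,z2)"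
    by simp
  moreover have "(deriv ^^ n) (\<lambda>w. pderiv2 F k1 k2 (w,z2)) a = pderiv2 F (k1+n) k2 (a,z2)" for n
    unfolding fg by (simp add: pderiv2_def g_def funpow_add add.commute[of k1])
  ultimately show ?thesis by simp
qed

lemma T2:
  assumes a: "cmod a < 1" and b: "cmod b < 1" and z2: "z2 \<in> ball b (1 - cmod b)"
  shows "(\<lambda>j. pderiv2 F P (k2+j) (a,b) / fact j * (z2-b)^j) sums pderiv2 F P k2 (a,z2)"
proof -
  define h where "h = (\<lambda>u. (deriv^^P)(\<lambda>w. F(w,u)) a)"
  have hh: "h holomorphic_on ball 0 1" unfolding h_def by (rule G4[OF a])
  have vh: "pderiv2 F P k2 (a,u) = (deriv^^k2) h u" if "cmod u < 1" for u
    using G3[of a u k2 P] a that by (simp add: h_def bidisc_iff)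
  have sub: "ball b (1 - cmod b) \<subseteq> ball 0 1"
    by (auto simp: dist_norm) (metis norm_triangle_sub add.commute less_diff_eq order_le_less_trans norm_minus_commute)
  have "((deriv^^k2) h) holomorphic_on ball b (1 - cmod b)"
    by (rule holomorphic_on_subset[OF holomorphic_higher_deriv[OF hh] sub]) simp
  hence hv: "(\<lambda>u. pderiv2 F P k2 (a,u)) holomorphic_on ball b (1 - cmod b)"
    by (rule holomorphic_transform) (use vh sub in auto)
  from holomorphic_power_series[OF hv z2]
  have "(\<lambda>n. (deriv ^^ n) (\<lambda>u. pderiv2 F P k2 (a,u)) b / fact n * (z2 - b) ^ n) sums pderiv2 F P k2 (a,z2)"
    by simp
  moreover have "(deriv ^^ n) (\<lambda>u. pderiv2 F P k2 (a,u)) b = pderiv2 F P (k2+n) (a,b)" for n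
  proof -
    have "(deriv ^^ n) (\<lambda>u. pderiv2 F P k2 (a,u)) b = (deriv ^^ n) ((deriv^^k2) h) b"
    proof (rule higher_deriv_cong_ev)
      have "eventually (\<lambda>u. u \<in> ball 0 1) (nhds b)"
        using b by (intro eventually_nhds_in_open) auto
      thus "eventually (\<lambda>u. pderiv2 F P k2 (a,u) = (deriv^^k2) h u) (nhds b)"
        by eventually_elim (use vh in auto)
    qed simp
    also have "\<dots> = (deriv ^^ (n + k2)) h b" by (simp add: funpow_add)
    also have "\<dots> = pderiv2 F P (k2+n) (a,b)"
      using G3[of a b "n+k2" P] a b by (simp add: h_def bidisc_iff add.commute)
    finally show ?thesis .
  qed
  ultimately show ?thesis by simp
qed

end



lemma norm_sums_le:
  fixes f :: "nat \<Rightarrow> complex"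
  assumes "f sums s" "g sums t" "\<And>n. norm (f n) \<le> g n"
  shows "norm s \<le> t"
proof -
  have sg: "summable g" using assms(2) by (simp add: sums_iff)
  have sn: "summable (\<lambda>n. norm (f n))"
    by (rule summable_comparison_test[OF _ sg]) (use assms(3) in auto)
  have "norm s = norm (suminf f)" using assms(1) by (simp add: sums_iff)
  also have "\<dots> \<le> (\<Sum>n. norm (f n))" by (rule summable_norm[OF sn])
  also have "\<dots> \<le> suminf g" by (rule suminf_le[OF assms(3) sn sg])
  also have "\<dots> = t" using assms(2) by (simp add: sums_iff)
  finally show ?thesis .
qed

lemma fact_quot_le: "fact (k + j) \<le> fact k * fact j * (2::real) ^ (k + j)"
proof -
  have n: "fact k * fact j * ((k + j) choose j) = (fact (k + j) :: nat)"
    using binomial_fact_lemma[of j "k+j"] by (simp add: algebra_simps)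
  have "fact k * fact j * real ((k + j) choose j) = fact (k + j)"
    using arg_cong[OF n, of real] by (simp only: of_nat_mult of_nat_fact)
  moreover have "real ((k + j) choose j) \<le> 2 ^ (k + j)"
    using binomial_le_pow2[of "k+j" j] by (metis of_nat_le_iff of_nat_numeral of_nat_power)
  ultimately show ?thesis
    by (metis mult_left_mono fact_ge_zero mult_nonneg_nonneg)
qed

lemma coef_bound:
  fixes l K x X :: real
  assumes l: "0 < l" and K: "0 \<le> K" and x: "0 \<le> x" "x \<le> 1 / (4 * l)"
    and X: "X \<le> fact (k + j) * l ^ (k + j) * K"
  shows "X / fact j * x ^ j \<le> fact k * l ^ k * 2 ^ k * K * (1/2) ^ j"
proof -
  have "X / fact j * x ^ j \<le> fact (k + j) * l ^ (k + j) * K / fact j * x ^ j"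
    using X x by (intro mult_right_mono divide_right_mono) auto
  also have "\<dots> \<le> fact k * fact j * 2 ^ (k + j) * l ^ (k + j) * K / fact j * (1 / (4 * l)) ^ j"
    using fact_quot_le[of k j] x l K
    by (intro mult_mono divide_right_mono power_mono) (auto intro!: mult_nonneg_nonneg)
  also have "\<dots> = fact k * l ^ k * 2 ^ k * K * ((1/(4*l))^j * 2^j * l^j)"
    by (simp add: power_add)
  also have "(1/(4*l))^j * 2^j * l^j = (1/2::real)^j"
  proof -
    have "(1/(4*l))*2*l = 1/2" using l by (simp add: field_simps)
    thus ?thesis by (metis power_mult_distrib)
  qed
  finally show ?thesis .
qed




locale setting =
  fixes \<beta> :: real and l1 l2 :: "complex \<times> complex \<Rightarrow> real"
    and F :: "complex \<times> complex \<Rightarrow> complex"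
  assumes beta: "\<beta> > 1"
    and l1_gt: "\<And>z. z \<in> bidisc \<Longrightarrow> l1 z > \<beta> / (1 - cmod (fst z))"
    and l2_gt: "\<And>z. z \<in> bidisc \<Longrightarrow> l2 z > \<beta> / (1 - cmod (snd z))"
    and LQ: "Q2 \<beta> l1 l2"
    and F_an: "analytic2_on F bidisc"
begin

lemma l1_pos: "z \<in> bidisc \<Longrightarrow> l1 z > 0"
  using l1_gt[of z] beta by (smt (verit) bidisc_def divide_pos_pos mem_Collect_eq)
lemma l2_pos: "z \<in> bidisc \<Longrightarrow> l2 z > 0"
  using l2_gt[of z] beta by (smt (verit) bidisc_def divide_pos_pos mem_Collect_eq)

lemma rad1: "z \<in> bidisc \<Longrightarrow> \<beta> / l1 z < 1 - cmod (fst z)"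
proof -
  assume z: "z \<in> bidisc"
  have p: "1 - cmod (fst z) > 0" using z by (simp add: bidisc_def)
  have "\<beta> < l1 z * (1 - cmod (fst z))" using l1_gt[OF z] p by (simp add: field_simps)
  thus ?thesis using l1_pos[OF z] by (simp add: field_simps)
qed
lemma rad2: "z \<in> bidisc \<Longrightarrow> \<beta> / l2 z < 1 - cmod (snd z)"
proof -
  assume z: "z \<in> bidisc"
  have p: "1 - cmod (snd z) > 0" using z by (simp add: bidisc_def)
  have "\<beta> < l2 z * (1 - cmod (snd z))" using l2_gt[OF z] p by (simp add: field_simps)
  thus ?thesis using l2_pos[OF z] by (simp add: field_simps)
qed

lemma poly_in:
  assumes z0: "z0 \<in> bidisc" and r: "r1 \<le> \<beta>" "r2 \<le> \<beta>"
    and z: "z \<in> cpolydisc z0 (r1 / l1 z0, r2 / l2 z0)"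
  shows "cmod (fst z - fst z0) < 1 - cmod (fst z0)" "cmod (snd z - snd z0) < 1 - cmod (snd z0)"
    "z \<in> bidisc"
proof -
  have "cmod (fst z - fst z0) \<le> r1 / l1 z0" using z by (simp add: cpolydisc_def)
  also have "\<dots> \<le> \<beta> / l1 z0" using r l1_pos[OF z0] by (simp add: divide_right_mono)
  finally show a: "cmod (fst z - fst z0) < 1 - cmod (fst z0)" using rad1[OF z0] by linarith
  have "cmod (snd z - snd z0) \<le> r2 / l2 z0" using z by (simp add: cpolydisc_def)
  also have "\<dots> \<le> \<beta> / l2 z0" using r l2_pos[OF z0] by (simp add: divide_right_mono)
  finally show b: "cmod (snd z - snd z0) < 1 - cmod (snd z0)" using rad2[OF z0] by linarith
  have "cmod (fst z) < 1" using a norm_triangle_ineq2[of "fst z" "fst z0"] by linarith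
  moreover have "cmod (snd z) < 1" using b norm_triangle_ineq2[of "snd z" "snd z0"] by linarith
  ultimately show "z \<in> bidisc" by (simp add: bidisc_def)
qed

lemma Lnorm_nonneg: "z \<in> bidisc \<Longrightarrow> 0 \<le> Lnorm F l1 l2 p q z"
  using l1_pos[of z] l2_pos[of z] by (simp add: Lnorm_def)

lemma pd_eq: "z \<in> bidisc \<Longrightarrow> cmod (pderiv2 F p q z) = fact p * fact q * l1 z ^ p * l2 z ^ q * Lnorm F l1 l2 p q z"
  using l1_pos[of z] l2_pos[of z] by (simp add: Lnorm_def)

lemma Q2_bounds:
  assumes \<rho>: "0 \<le> \<rho>" "\<rho> \<le> \<beta>" and l: "l \<in> {l1, l2}"
  obtains lo hi where "0 < lo" "0 < hi"
    "\<And>z0 z. z0 \<in> bidisc \<Longrightarrow> z \<in> bidisc \<Longrightarrow> z \<in> cpolydisc z0 (\<rho> / l1 z0, \<rho> / l2 z0) \<Longrightarrow>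
        lo \<le> l z / l z0 \<and> l z / l z0 \<le> hi"
proof -
  let ?L1 = "lambda1 l1 l2 l (\<rho>, \<rho>)" and ?L2 = "lambda2 l1 l2 l (\<rho>, \<rho>)"
  have q: "0 < ?L1" "?L1 \<le> ?L2" "?L2 < \<infinity>" using LQ \<rho> l unfolding Q2_def by blast+
  obtain lo where lo: "?L1 = ereal lo" using q by (cases ?L1) auto
  obtain hi where hi: "?L2 = ereal hi" using q by (cases ?L2) auto
  show ?thesis
  proof (rule that)
    show "0 < lo" using q lo by simp
    show "0 < hi" using q lo hi by simp
    fix z0 z assume z0: "z0 \<in> bidisc" and z: "z \<in> bidisc" "z \<in> cpolydisc z0 (\<rho> / l1 z0, \<rho> / l2 z0)"
    have "?L1 \<le> ereal (l z / l z0)"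
      unfolding lambda1_def by (rule INF_lower2[OF z0]) (rule INF_lower, use z in simp)
    moreover have "ereal (l z / l z0) \<le> ?L2"
      unfolding lambda2_def by (rule SUP_upper2[OF z0]) (rule SUP_upper, use z in simp)
    ultimately show "lo \<le> l z / l z0 \<and> l z / l z0 \<le> hi" using lo hi by simp
  qed
qed

lemma fin_idx: "finite {f k1 k2 | k1 k2. k1 + k2 \<le> (n::nat)}"
proof -
  have "{f k1 k2 | k1 k2. k1 + k2 \<le> n} \<subseteq> (\<lambda>(k1,k2). f k1 k2) ` ({..n} \<times> {..n})"
    by auto
  thus ?thesis by (rule finite_subset) auto
qed

end



lemma geo_half: "(\<lambda>n. c * (1/2::real)^n) sums (2 * c)"
  using sums_mult[OF geometric_sums[of "1/2::real"], of c] by (simp add: mult.commute)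

context setting begin

lemma nec_est:
  assumes z0: "(a,b) \<in> bidisc" and z: "(z1,z2) \<in> cpolydisc (a,b) ((1/4) / l1 (a,b), (1/4) / l2 (a,b))"
    and M: "0 \<le> M" and BM: "\<And>p q. Lnorm F l1 l2 p q (a,b) \<le> M"
  shows "cmod (pderiv2 F k1 k2 (z1,z2)) \<le> 4 * 2^(k1+k2) * fact k1 * fact k2 * l1 (a,b)^k1 * l2 (a,b)^k2 * M"
proof -
  define L1 where "L1 = l1 (a,b)"
  define L2 where "L2 = l2 (a,b)"
  have L1p: "L1 > 0" and L2p: "L2 > 0" using l1_pos[OF z0] l2_pos[OF z0] by (auto simp: L1_def L2_def)
  have q4: "(1/4::real) \<le> \<beta>" using beta by simp
  note pin = poly_in[OF z0 q4 q4 z]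
  have d1: "cmod (z1 - a) \<le> 1 / (4 * L1)" and d2: "cmod (z2 - b) \<le> 1 / (4 * L2)"
    using z by (auto simp: cpolydisc_def L1_def L2_def)
  have a1: "cmod a < 1" "cmod b < 1" using z0 by (auto simp: bidisc_def)
  have z1b: "z1 \<in> ball a (1 - cmod a)" using pin(1) by (simp add: dist_norm norm_minus_commute)
  have z2b: "z2 \<in> ball b (1 - cmod b)" using pin(2) by (simp add: dist_norm norm_minus_commute)
  have z2u: "cmod z2 < 1" using pin(3) by (simp add: bidisc_def)
  have bnd0: "cmod (pderiv2 F p q (a,b)) \<le> fact p * fact q * L1^p * L2^q * M" for p q
    unfolding pd_eq[OF z0] L1_def[symmetric] L2_def[symmetric]
    using BM[of p q] L1p L2p by (intro mult_left_mono) auto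
  have inner: "cmod (pderiv2 F P k2 (a,z2)) \<le> 2 * (fact k2 * L2^k2 * 2^k2 * (fact P * L1^P * M))" for P
  proof (rule norm_sums_le[OF T2[OF F_an a1 z2b] geo_half])
    fix n
    have "cmod (pderiv2 F P (k2+n) (a,b)) / fact n * cmod (z2 - b) ^ n
        \<le> fact k2 * L2 ^ k2 * 2 ^ k2 * (fact P * L1^P * M) * (1/2) ^ n"
    proof (rule coef_bound[OF L2p _ _ d2])
      show "0 \<le> fact P * L1 ^ P * M" using L1p M by simp
      show "cmod (pderiv2 F P (k2 + n) (a, b)) \<le> fact (k2 + n) * L2 ^ (k2 + n) * (fact P * L1 ^ P * M)"
        using bnd0[of P "k2+n"] by (simp add: algebra_simps)
    qed simp
    thus "cmod (pderiv2 F P (k2 + n) (a, b) / fact n * (z2 - b) ^ n)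
        \<le> fact k2 * L2 ^ k2 * 2 ^ k2 * (fact P * L1^P * M) * (1/2) ^ n"
      by (simp add: norm_mult norm_divide norm_power)
  qed
  have outer: "cmod (pderiv2 F k1 k2 (z1,z2)) \<le> 2 * (fact k1 * L1^k1 * 2^k1 * (2 * fact k2 * L2^k2 * 2^k2 * M))"
  proof (rule norm_sums_le[OF T1[OF F_an a1(1) z2u z1b] geo_half])
    fix n
    have "cmod (pderiv2 F (k1+n) k2 (a,z2)) / fact n * cmod (z1 - a) ^ n
        \<le> fact k1 * L1 ^ k1 * 2 ^ k1 * (2 * fact k2 * L2^k2 * 2^k2 * M) * (1/2) ^ n"
    proof (rule coef_bound[OF L1p _ _ d1])
      show "0 \<le> 2 * fact k2 * L2^k2 * 2^k2 * M" using L2p M by simp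
      show "cmod (pderiv2 F (k1+n) k2 (a,z2)) \<le> fact (k1 + n) * L1 ^ (k1 + n) * (2 * fact k2 * L2^k2 * 2^k2 * M)"
        using inner[of "k1+n"] by (simp add: algebra_simps)
    qed simp
    thus "cmod (pderiv2 F (k1+n) k2 (a,z2) / fact n * (z1 - a) ^ n)
        \<le> fact k1 * L1 ^ k1 * 2 ^ k1 * (2 * fact k2 * L2^k2 * 2^k2 * M) * (1/2) ^ n"
      by (simp add: norm_mult norm_divide norm_power)
  qed
  thus ?thesis by (simp add: L1_def L2_def power_add algebra_simps)
qed

end



context setting begin

lemma necessity:
  assumes BI0: "bounded_L_index_joint F l1 l2"
  shows "\<exists>r1 r2 (n0::nat) p0. 0 < r1 \<and> r1 \<le> \<beta> \<and> 0 < r2 \<and> r2 \<le> \<beta> \<and> p0 > 1 \<and>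
      (\<forall>z0\<in>bidisc. \<exists>k10 k20. k10 + k20 \<le> n0 \<and>
         (\<forall>k1 k2 z. k1 + k2 \<le> n0 \<and> z \<in> cpolydisc z0 (r1 / l1 z0, r2 / l2 z0) \<longrightarrow>
            Lnorm F l1 l2 k1 k2 z \<le>
              p0 / (fact k10 * fact k20) *
              (cmod (pderiv2 F k10 k20 z0) / (l1 z0 ^ k10 * l2 z0 ^ k20))))"
proof -
  from BI0 obtain N where BI: "\<And>z p1 p2. z \<in> bidisc \<Longrightarrow>
      Lnorm F l1 l2 p1 p2 z \<le> Max {Lnorm F l1 l2 k1 k2 z | k1 k2. k1 + k2 \<le> N}"
    unfolding bounded_L_index_joint_def by blast
  have q4: "(0::real) \<le> 1/4" "(1/4::real) \<le> \<beta>" using beta by auto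
  obtain lo1 hi1 where lo1: "0 < lo1" "0 < hi1" and LB1': "\<And>z0 z. z0 \<in> bidisc \<Longrightarrow> z \<in> bidisc \<Longrightarrow>
      z \<in> cpolydisc z0 ((1/4) / l1 z0, (1/4) / l2 z0) \<Longrightarrow> lo1 \<le> l1 z / l1 z0 \<and> l1 z / l1 z0 \<le> hi1"
    by (rule Q2_bounds[OF q4, of l1]) auto
  have LB1: "\<And>z0 z. z0 \<in> bidisc \<Longrightarrow> z \<in> bidisc \<Longrightarrow>
      z \<in> cpolydisc z0 ((1/4) / l1 z0, (1/4) / l2 z0) \<Longrightarrow> lo1 \<le> l1 z / l1 z0"
    using LB1' by blast
  obtain lo2 hi2 where lo2: "0 < lo2" "0 < hi2" and LB2': "\<And>z0 z. z0 \<in> bidisc \<Longrightarrow> z \<in> bidisc \<Longrightarrow>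
      z \<in> cpolydisc z0 ((1/4) / l1 z0, (1/4) / l2 z0) \<Longrightarrow> lo2 \<le> l2 z / l2 z0 \<and> l2 z / l2 z0 \<le> hi2"
    by (rule Q2_bounds[OF q4, of l2]) auto
  have LB2: "\<And>z0 z. z0 \<in> bidisc \<Longrightarrow> z \<in> bidisc \<Longrightarrow>
      z \<in> cpolydisc z0 ((1/4) / l1 z0, (1/4) / l2 z0) \<Longrightarrow> lo2 \<le> l2 z / l2 z0"
    using LB2' by blast
  define C where "C = max 1 (max (1/lo1) (1/lo2))"
  define p0 where "p0 = max 2 (4 * 2^N * C^N)"
  have C1: "C \<ge> 1" by (simp add: C_def)
  have main: "\<exists>k10 k20. k10 + k20 \<le> N \<and>
         (\<forall>k1 k2 z. k1 + k2 \<le> N \<and> z \<in> cpolydisc z0 ((1/4) / l1 z0, (1/4) / l2 z0) \<longrightarrow>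
            Lnorm F l1 l2 k1 k2 z \<le>
              p0 / (fact k10 * fact k20) *
              (cmod (pderiv2 F k10 k20 z0) / (l1 z0 ^ k10 * l2 z0 ^ k20)))"
    if z0: "z0 \<in> bidisc" for z0
  proof -
    obtain a b where ab: "z0 = (a,b)" by (cases z0)
    define S where "S = {Lnorm F l1 l2 k1 k2 z0 | k1 k2. k1 + k2 \<le> N}"
    define M where "M = Max S"
    have finS: "finite S" unfolding S_def by (rule fin_idx)
    have neS: "S \<noteq> {}" unfolding S_def by (auto intro!: exI[of _ 0])
    from Max_in[OF finS neS] obtain k10 k20 where k0: "k10 + k20 \<le> N" "M = Lnorm F l1 l2 k10 k20 z0"
      unfolding M_def S_def by auto
    have BM: "Lnorm F l1 l2 p q z0 \<le> M" for p q using BI[OF z0] by (simp add: M_def S_def)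
    have M0: "0 \<le> M" using k0 Lnorm_nonneg[OF z0] by simp
    have L1p: "l1 z0 > 0" and L2p: "l2 z0 > 0" using l1_pos[OF z0] l2_pos[OF z0] by auto
    have rhs: "p0 / (fact k10 * fact k20) * (cmod (pderiv2 F k10 k20 z0) / (l1 z0 ^ k10 * l2 z0 ^ k20))
        = p0 * M" using k0 by (simp add: Lnorm_def)
    show ?thesis
    proof (intro exI conjI allI impI)
      show "k10 + k20 \<le> N" by fact
      fix k1 k2 z assume kz: "k1 + k2 \<le> N \<and> z \<in> cpolydisc z0 ((1/4) / l1 z0, (1/4) / l2 z0)"
      obtain z1 z2 where zz: "z = (z1,z2)" by (cases z)
      have zb: "z \<in> bidisc" using poly_in[OF z0 q4(2) q4(2)] kz by blast
      have lz1: "l1 z > 0" and lz2: "l2 z > 0" using l1_pos[OF zb] l2_pos[OF zb] by auto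
      have est: "cmod (pderiv2 F k1 k2 z) \<le> 4 * 2^(k1+k2) * fact k1 * fact k2 * l1 z0^k1 * l2 z0^k2 * M"
        using nec_est[of a b z1 z2 M k1 k2] z0 kz BM M0 by (simp add: ab zz)
      have r1: "l1 z0 / l1 z \<le> C"
      proof -
        have "lo1 \<le> l1 z / l1 z0" using LB1[OF z0 zb] kz by blast
        hence "lo1 * l1 z0 \<le> l1 z" using L1p by (simp add: field_simps)
        hence "l1 z0 / l1 z \<le> 1 / lo1" using lo1(1) lz1 L1p by (simp add: field_simps)
        thus ?thesis by (simp add: C_def)
      qed
      have r2: "l2 z0 / l2 z \<le> C"
      proof -
        have "lo2 \<le> l2 z / l2 z0" using LB2[OF z0 zb] kz by blast
        hence "lo2 * l2 z0 \<le> l2 z" using L2p by (simp add: field_simps)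
        hence "l2 z0 / l2 z \<le> 1 / lo2" using lo2(1) lz2 L2p by (simp add: field_simps)
        thus ?thesis by (simp add: C_def)
      qed
      have "Lnorm F l1 l2 k1 k2 z = cmod (pderiv2 F k1 k2 z) / (fact k1 * fact k2 * l1 z ^ k1 * l2 z ^ k2)"
        by (simp add: Lnorm_def)
      also have "\<dots> \<le> 4 * 2^(k1+k2) * fact k1 * fact k2 * l1 z0^k1 * l2 z0^k2 * M / (fact k1 * fact k2 * l1 z ^ k1 * l2 z ^ k2)"
        using est lz1 lz2 by (intro divide_right_mono) auto
      also have "\<dots> = 4 * 2^(k1+k2) * ((l1 z0 / l1 z)^k1 * (l2 z0 / l2 z)^k2) * M"
        using lz1 lz2 by (simp add: power_divide field_simps)
      also have "\<dots> \<le> 4 * 2^N * C^N * M"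
      proof -
        have "(l1 z0 / l1 z)^k1 * (l2 z0 / l2 z)^k2 \<le> C^k1 * C^k2"
          using r1 r2 L1p L2p lz1 lz2 C1 by (intro mult_mono power_mono) auto
        also have "\<dots> = C^(k1+k2)" by (simp add: power_add)
        also have "\<dots> \<le> C^N" using C1 kz by (intro power_increasing) auto
        finally have A: "(l1 z0 / l1 z)^k1 * (l2 z0 / l2 z)^k2 \<le> C^N" .
        have B: "(2::real)^(k1+k2) \<le> 2^N" using kz by (intro power_increasing) auto
        show ?thesis using A B M0 C1 L1p L2p lz1 lz2
          by (intro mult_right_mono mult_mono) (auto intro!: mult_nonneg_nonneg)
      qed
      also have "\<dots> \<le> p0 * M" using M0 by (intro mult_right_mono) (auto simp: p0_def)
      finally show "Lnorm F l1 l2 k1 k2 z \<le> p0 / (fact k10 * fact k20) *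
              (cmod (pderiv2 F k10 k20 z0) / (l1 z0 ^ k10 * l2 z0 ^ k20))" using rhs by simp
    qed
  qed
  show ?thesis
    by (rule exI[of _ "1/4"], rule exI[of _ "1/4"], rule exI[of _ N], rule exI[of _ p0])
       (use beta main in \<open>auto simp: p0_def\<close>)
qed

end



context setting begin

lemma cauchy_est:
  assumes z0: "(a,b) \<in> bidisc" and B: "\<And>z. z \<in> cpolydisc (a,b) (\<beta> / l1 (a,b), \<beta> / l2 (a,b)) \<Longrightarrow> cmod (F z) \<le> B"
  shows "cmod (pderiv2 F p q (a,b)) \<le> fact p * fact q * B * l1 (a,b)^p * l2 (a,b)^q / \<beta>^(p+q)"
proof -
  define \<rho>1 where "\<rho>1 = \<beta> / l1 (a,b)"
  define \<rho>2 where "\<rho>2 = \<beta> / l2 (a,b)"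
  have L1p: "l1 (a,b) > 0" and L2p: "l2 (a,b) > 0" using l1_pos[OF z0] l2_pos[OF z0] by auto
  have r1p: "\<rho>1 > 0" and r2p: "\<rho>2 > 0" using L1p L2p beta by (auto simp: \<rho>1_def \<rho>2_def)
  have r1: "\<rho>1 < 1 - cmod a" and r2: "\<rho>2 < 1 - cmod b" using rad1[OF z0] rad2[OF z0] by (auto simp: \<rho>1_def \<rho>2_def)
  have ab: "cmod a < 1" "cmod b < 1" using z0 by (auto simp: bidisc_def)
  have sub1: "cball a \<rho>1 \<subseteq> ball 0 1"
    using r1 by (auto simp: dist_norm) (metis norm_triangle_sub add.commute le_diff_eq order_le_less_trans norm_minus_commute less_diff_eq add_le_less_mono dual_order.trans)
  have sub2: "cball b \<rho>2 \<subseteq> ball 0 1"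
    using r2 by (auto simp: dist_norm) (metis norm_triangle_sub add.commute le_diff_eq order_le_less_trans norm_minus_commute less_diff_eq add_le_less_mono dual_order.trans)
  define g where "g = (\<lambda>w. (deriv^^q)(\<lambda>u. F(w,u)) b)"
  have gh: "g holomorphic_on ball 0 1" unfolding g_def by (rule G2[OF F_an ab(2)])
  have gbound: "norm (g w) \<le> fact q * B / \<rho>2^q" if w: "norm (a - w) = \<rho>1" for w
  proof -
    have wu: "cmod w < 1" using sub1 w by (auto simp: dist_norm)
    have hF: "(\<lambda>u. F(w,u)) holomorphic_on ball 0 1" by (rule G1u[OF F_an wu])
    show ?thesis unfolding g_def
    proof (rule Cauchy_inequality)
      show "(\<lambda>u. F(w,u)) holomorphic_on ball b \<rho>2"
        using hF by (rule holomorphic_on_subset) (use sub2 in auto)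
      show "continuous_on (cball b \<rho>2) (\<lambda>u. F(w,u))"
        using holomorphic_on_imp_continuous_on[OF hF] by (rule continuous_on_subset) (use sub2 in auto)
      show "0 < \<rho>2" by fact
      fix u assume u: "norm (b - u) = \<rho>2"
      have "(w,u) \<in> cpolydisc (a,b) (\<beta> / l1 (a,b), \<beta> / l2 (a,b))"
        using w u by (simp add: cpolydisc_def \<rho>1_def \<rho>2_def norm_minus_commute)
      thus "cmod (F (w,u)) \<le> B" by (rule B)
    qed
  qed
  have "cmod (pderiv2 F p q (a,b)) = norm ((deriv^^p) g a)" by (simp add: pderiv2_def g_def)
  also have "\<dots> \<le> fact p * (fact q * B / \<rho>2^q) / \<rho>1^p"
  proof (rule Cauchy_inequality)
    show "g holomorphic_on ball a \<rho>1" using gh by (rule holomorphic_on_subset) (use sub1 in auto)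
    show "continuous_on (cball a \<rho>1) g"
      using holomorphic_on_imp_continuous_on[OF gh] by (rule continuous_on_subset) (use sub1 in auto)
  qed (use r1p gbound in auto)
  also have "\<dots> = fact p * fact q * B * l1 (a,b)^p * l2 (a,b)^q / \<beta>^(p+q)"
    using L1p L2p beta by (simp add: \<rho>1_def \<rho>2_def power_divide power_add mult_ac)
  finally show ?thesis .
qed

end



context setting begin

lemma sufficiency:
  assumes r: "0 < r1" "r1 \<le> \<beta>" "0 < r2" "r2 \<le> \<beta>" and p0: "p0 > 1"
    and P: "\<forall>z0\<in>bidisc. \<exists>k10 k20. k10 + k20 \<le> n0 \<and>
         (\<forall>k1 k2 z. k1 + k2 \<le> n0 \<and> z \<in> cpolydisc z0 (r1 / l1 z0, r2 / l2 z0) \<longrightarrow>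
            Lnorm F l1 l2 k1 k2 z \<le>
              p0 / (fact k10 * fact k20) *
              (cmod (pderiv2 F k10 k20 z0) / (l1 z0 ^ k10 * l2 z0 ^ k20)))"
  shows "bounded_L_index_joint F l1 l2"
proof -
  define Mx where "Mx z = Max {Lnorm F l1 l2 k1 k2 z | k1 k2. k1 + k2 \<le> n0}" for z
  have Mx_ge: "Lnorm F l1 l2 k1 k2 z \<le> Mx z" if "k1 + k2 \<le> n0" for k1 k2 z
    unfolding Mx_def by (rule Max_ge[OF fin_idx]) (use that in auto)
  have Mx_in: "\<exists>k1 k2. k1 + k2 \<le> n0 \<and> Mx z = Lnorm F l1 l2 k1 k2 z" for z
  proof -
    have "Mx z \<in> {Lnorm F l1 l2 k1 k2 z | k1 k2. k1 + k2 \<le> n0}"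
      unfolding Mx_def by (rule Max_in[OF fin_idx]) (auto intro!: exI[of _ 0])
    thus ?thesis by auto
  qed
  have Mx0: "0 \<le> Mx z" if "z \<in> bidisc" for z
    using Mx_ge[of 0 0 z] Lnorm_nonneg[OF that, of 0 0] by simp
  have step: "Mx w \<le> p0 * Mx z0" if z0: "z0 \<in> bidisc" and w: "w \<in> cpolydisc z0 (r1 / l1 z0, r2 / l2 z0)" for z0 w
  proof -
    from P z0 obtain k10 k20 where k0: "k10 + k20 \<le> n0" and
      bd: "\<And>k1 k2. k1 + k2 \<le> n0 \<Longrightarrow> Lnorm F l1 l2 k1 k2 w \<le> p0 / (fact k10 * fact k20) *
              (cmod (pderiv2 F k10 k20 z0) / (l1 z0 ^ k10 * l2 z0 ^ k20))"
      using w by blast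
    have rhs: "p0 / (fact k10 * fact k20) * (cmod (pderiv2 F k10 k20 z0) / (l1 z0 ^ k10 * l2 z0 ^ k20))
        = p0 * Lnorm F l1 l2 k10 k20 z0" by (simp add: Lnorm_def)
    obtain k1 k2 where "k1 + k2 \<le> n0" "Mx w = Lnorm F l1 l2 k1 k2 w" using Mx_in by blast
    hence "Mx w \<le> p0 * Lnorm F l1 l2 k10 k20 z0" using bd rhs by metis
    also have "\<dots> \<le> p0 * Mx z0" using Mx_ge[OF k0] p0 by (intro mult_left_mono) auto
    finally show ?thesis .
  qed
  have b0: "(0::real) \<le> \<beta>" using beta by simp
  obtain hi1 where hi1: "0 < hi1" and HB1: "\<And>z0 z. z0 \<in> bidisc \<Longrightarrow> z \<in> bidisc \<Longrightarrow>
      z \<in> cpolydisc z0 (\<beta> / l1 z0, \<beta> / l2 z0) \<Longrightarrow> l1 z / l1 z0 \<le> hi1"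
    by (rule Q2_bounds[OF b0 order_refl, of l1]) auto
  obtain hi2 where hi2: "0 < hi2" and HB2: "\<And>z0 z. z0 \<in> bidisc \<Longrightarrow> z \<in> bidisc \<Longrightarrow>
      z \<in> cpolydisc z0 (\<beta> / l1 z0, \<beta> / l2 z0) \<Longrightarrow> l2 z / l2 z0 \<le> hi2"
    by (rule Q2_bounds[OF b0 order_refl, of l2]) auto
  define \<Lambda> where "\<Lambda> = max hi1 hi2"
  define r where "r = min r1 r2"
  define m where "m = nat \<lceil>\<beta> * \<Lambda> / r\<rceil> + 1"
  have \<Lambda>p: "\<Lambda> > 0" using hi1 by (simp add: \<Lambda>_def)
  have rp: "r > 0" using r by (simp add: r_def)
  have m1: "m \<ge> 1" by (simp add: m_def)
  have mbig: "\<beta> * \<Lambda> \<le> real m * r"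
  proof -
    have "\<beta> * \<Lambda> / r \<le> real m" unfolding m_def by linarith
    thus ?thesis using rp by (simp add: field_simps)
  qed
  have chain: "Mx z \<le> p0^m * Mx z0" if z0: "z0 \<in> bidisc" and z: "z \<in> cpolydisc z0 (\<beta> / l1 z0, \<beta> / l2 z0)" for z0 z
  proof -
    define w where "w i = (fst z0 + of_real (real i / real m) * (fst z - fst z0),
                         snd z0 + of_real (real i / real m) * (snd z - snd z0))" for i
    have L1p: "l1 z0 > 0" and L2p: "l2 z0 > 0" using l1_pos[OF z0] l2_pos[OF z0] by auto
    have d1: "cmod (fst z - fst z0) \<le> \<beta> / l1 z0" and d2: "cmod (snd z - snd z0) \<le> \<beta> / l2 z0"
      using z by (auto simp: cpolydisc_def)
    have wpoly: "w i \<in> cpolydisc z0 (\<beta> / l1 z0, \<beta> / l2 z0)" if "i \<le> m" for i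
    proof -
      have t: "0 \<le> real i / real m" "real i / real m \<le> 1" using that m1 by auto
      have "cmod (of_real (real i / real m) * (fst z - fst z0)) \<le> 1 * (\<beta> / l1 z0)"
        unfolding norm_mult norm_of_real using t d1 by (intro mult_mono) auto
      moreover have "cmod (of_real (real i / real m) * (snd z - snd z0)) \<le> 1 * (\<beta> / l2 z0)"
        unfolding norm_mult norm_of_real using t d2 by (intro mult_mono) auto
      ultimately show ?thesis by (simp add: cpolydisc_def w_def)
    qed
    have wb: "w i \<in> bidisc" if "i \<le> m" for i
      using poly_in[OF z0 order_refl order_refl wpoly[OF that]] by blast
    have wstep: "w (Suc i) \<in> cpolydisc (w i) (r1 / l1 (w i), r2 / l2 (w i))" if "Suc i \<le> m" for i
    proof -
      have i: "i \<le> m" using that by simp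
      have lw1: "l1 (w i) \<le> \<Lambda> * l1 z0"
      proof -
        have "l1 (w i) / l1 z0 \<le> \<Lambda>" using HB1[OF z0 wb[OF i] wpoly[OF i]] by (simp add: \<Lambda>_def)
        thus ?thesis using L1p by (simp add: divide_le_eq)
      qed
      have lw2: "l2 (w i) \<le> \<Lambda> * l2 z0"
      proof -
        have "l2 (w i) / l2 z0 \<le> \<Lambda>" using HB2[OF z0 wb[OF i] wpoly[OF i]] by (simp add: \<Lambda>_def)
        thus ?thesis using L2p by (simp add: divide_le_eq)
      qed
      have lw1p: "l1 (w i) > 0" and lw2p: "l2 (w i) > 0" using l1_pos[OF wb[OF i]] l2_pos[OF wb[OF i]] by auto
      have c: "(of_real (real (Suc i) / real m) :: complex) = of_real (real i / real m) + of_real (1 / real m)"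
        by (simp add: add_divide_distrib)
      have diff1: "fst (w (Suc i)) - fst (w i) = of_real (1 / real m) * (fst z - fst z0)"
        unfolding w_def fst_conv snd_conv c by (simp add: algebra_simps)
      have diff2: "snd (w (Suc i)) - snd (w i) = of_real (1 / real m) * (snd z - snd z0)"
        unfolding w_def fst_conv snd_conv c by (simp add: algebra_simps)
      have key: "\<beta> / l z0 / real m \<le> r' / l (w i)"
        if lp: "l z0 > 0" "l (w i) > 0" and lw: "l (w i) \<le> \<Lambda> * l z0" and r': "r \<le> r'" for l :: "complex \<times> complex \<Rightarrow> real" and r'
      proof -
        have "\<beta> / l z0 / real m = \<beta> * \<Lambda> / (real m * (\<Lambda> * l z0))" using \<Lambda>p m1 lp by (simp add: field_simps)
        also have "\<dots> \<le> real m * r / (real m * (\<Lambda> * l z0))"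
          using mbig \<Lambda>p m1 lp by (intro divide_right_mono) auto
        also have "\<dots> = r / (\<Lambda> * l z0)" using m1 by simp
        also have "\<dots> \<le> r' / (\<Lambda> * l z0)" using r' \<Lambda>p lp by (intro divide_right_mono) auto
        also have "\<dots> \<le> r' / l (w i)" using lw lp r' rp \<Lambda>p by (intro divide_left_mono) auto
        finally show ?thesis .
      qed
      have "cmod (fst (w (Suc i)) - fst (w i)) \<le> r1 / l1 (w i)"
      proof -
        have "cmod (fst (w (Suc i)) - fst (w i)) = cmod (fst z - fst z0) / real m"
          unfolding diff1 norm_mult norm_of_real using m1 by simp
        also have "\<dots> \<le> \<beta> / l1 z0 / real m" using d1 m1 by (intro divide_right_mono) auto
        also have "\<dots> \<le> r1 / l1 (w i)" by (rule key[OF L1p lw1p lw1]) (simp add: r_def)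
        finally show ?thesis .
      qed
      moreover have "cmod (snd (w (Suc i)) - snd (w i)) \<le> r2 / l2 (w i)"
      proof -
        have "cmod (snd (w (Suc i)) - snd (w i)) = cmod (snd z - snd z0) / real m"
          unfolding diff2 norm_mult norm_of_real using m1 by simp
        also have "\<dots> \<le> \<beta> / l2 z0 / real m" using d2 m1 by (intro divide_right_mono) auto
        also have "\<dots> \<le> r2 / l2 (w i)" by (rule key[OF L2p lw2p lw2]) (simp add: r_def)
        finally show ?thesis .
      qed
      ultimately show ?thesis by (simp add: cpolydisc_def)
    qed
    have ind: "i \<le> m \<Longrightarrow> Mx (w i) \<le> p0^i * Mx z0" for i
    proof (induction i)
      case 0
      have "w 0 = z0" by (simp add: w_def)
      thus ?case by simp
    next
      case (Suc i)
      have "Mx (w (Suc i)) \<le> p0 * Mx (w i)" by (rule step[OF wb wstep]) (use Suc.prems in auto)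
      also have "\<dots> \<le> p0 * (p0^i * Mx z0)" using Suc p0 by (intro mult_left_mono) auto
      finally show ?case by simp
    qed
    have "w m = z" using m1 by (simp add: w_def)
    thus ?thesis using ind[of m] by simp
  qed
  obtain N where N: "p0^m < \<beta>^N" using real_arch_pow[OF beta] by blast
  define N' where "N' = max N n0"
  show ?thesis unfolding bounded_L_index_joint_def
  proof (intro exI[of _ N'] ballI allI)
    fix z0 p1 p2 assume z0: "z0 \<in> bidisc"
    define T where "T = Max {Lnorm F l1 l2 k1 k2 z0 | k1 k2. k1 + k2 \<le> N'}"
    have T_ge: "Lnorm F l1 l2 k1 k2 z0 \<le> T" if "k1 + k2 \<le> N'" for k1 k2
      unfolding T_def by (rule Max_ge[OF fin_idx]) (use that in auto)
    show "Lnorm F l1 l2 p1 p2 z0 \<le> Max {Lnorm F l1 l2 k1 k2 z0 | k1 k2. k1 + k2 \<le> N'}"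
    proof (cases "p1 + p2 \<le> N'")
      case True thus ?thesis using T_ge by (simp add: T_def)
    next
      case False
      obtain a b where ab: "z0 = (a,b)" by (cases z0)
      define B where "B = p0^m * Mx z0"
      have FB: "cmod (F z) \<le> B" if "z \<in> cpolydisc (a,b) (\<beta> / l1 (a,b), \<beta> / l2 (a,b))" for z
      proof -
        have "cmod (F z) = Lnorm F l1 l2 0 0 z" by (simp add: Lnorm_def pderiv2_def)
        also have "\<dots> \<le> Mx z" by (rule Mx_ge) simp
        also have "\<dots> \<le> B" unfolding B_def by (rule chain[OF z0]) (use that ab in simp)
        finally show ?thesis .
      qed
      have L1p: "l1 z0 > 0" and L2p: "l2 z0 > 0" using l1_pos[OF z0] l2_pos[OF z0] by auto
      have ce: "cmod (pderiv2 F p1 p2 z0) \<le> fact p1 * fact p2 * B * l1 z0^p1 * l2 z0^p2 / \<beta>^(p1+p2)"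
        using cauchy_est[of a b B p1 p2] z0 FB by (simp add: ab)
      have "Lnorm F l1 l2 p1 p2 z0 = cmod (pderiv2 F p1 p2 z0) / (fact p1 * fact p2 * l1 z0^p1 * l2 z0^p2)"
        by (simp add: Lnorm_def)
      also have "\<dots> \<le> (fact p1 * fact p2 * B * l1 z0^p1 * l2 z0^p2 / \<beta>^(p1+p2)) / (fact p1 * fact p2 * l1 z0^p1 * l2 z0^p2)"
        using ce L1p L2p by (intro divide_right_mono) auto
      also have "\<dots> = B / \<beta>^(p1+p2)" using L1p L2p by simp
      also have "\<dots> \<le> Mx z0"
      proof -
        have "\<beta>^N \<le> \<beta>^(p1+p2)" using False beta by (intro power_increasing) (auto simp: N'_def)
        hence "p0^m \<le> \<beta>^(p1+p2)" using N by simp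
        hence "p0^m * Mx z0 \<le> \<beta>^(p1+p2) * Mx z0" using Mx0[OF z0] by (intro mult_right_mono) auto
        thus ?thesis using beta by (simp add: B_def field_simps)
      qed
      also have "\<dots> \<le> T"
      proof -
        obtain k1 k2 where "k1 + k2 \<le> n0" "Mx z0 = Lnorm F l1 l2 k1 k2 z0" using Mx_in by blast
        thus ?thesis using T_ge[of k1 k2] by (simp add: N'_def)
      qed
      finally show ?thesis by (simp add: T_def)
    qed
  qed
qed

end

theorem theorem4:
  fixes \<beta> :: real and l1 l2 :: "complex \<times> complex \<Rightarrow> real"
    and F :: "complex \<times> complex \<Rightarrow> complex"
  assumes beta: "\<beta> > 1"
    and cont1: "continuous_on bidisc l1" and cont2: "continuous_on bidisc l2"
    and l1_gt: "\<And>z. z \<in> bidisc \<Longrightarrow> l1 z > \<beta> / (1 - cmod (fst z))"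
    and l2_gt: "\<And>z. z \<in> bidisc \<Longrightarrow> l2 z > \<beta> / (1 - cmod (snd z))"
    and LQ: "Q2 \<beta> l1 l2"
    and F_an: "analytic2_on F bidisc"
  shows "bounded_L_index_joint F l1 l2 \<longleftrightarrow>
    (\<exists>r1 r2 (n0::nat) p0. 0 < r1 \<and> r1 \<le> \<beta> \<and> 0 < r2 \<and> r2 \<le> \<beta> \<and> p0 > 1 \<and>
      (\<forall>z0\<in>bidisc. \<exists>k10 k20. k10 + k20 \<le> n0 \<and>
         (\<forall>k1 k2 z. k1 + k2 \<le> n0 \<and> z \<in> cpolydisc z0 (r1 / l1 z0, r2 / l2 z0) \<longrightarrow>
            Lnorm F l1 l2 k1 k2 z \<le>
              p0 / (fact k10 * fact k20) *
              (cmod (pderiv2 F k10 k20 z0) / (l1 z0 ^ k10 * l2 z0 ^ k20)))))"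
  proof -
  interpret setting \<beta> l1 l2 F
    by unfold_locales (use beta l1_gt l2_gt LQ F_an in auto)
  show ?thesis
  proof
    assume "bounded_L_index_joint F l1 l2"
    thus "\<exists>r1 r2 (n0::nat) p0. 0 < r1 \<and> r1 \<le> \<beta> \<and> 0 < r2 \<and> r2 \<le> \<beta> \<and> p0 > 1 \<and>
      (\<forall>z0\<in>bidisc. \<exists>k10 k20. k10 + k20 \<le> n0 \<and>
         (\<forall>k1 k2 z. k1 + k2 \<le> n0 \<and> z \<in> cpolydisc z0 (r1 / l1 z0, r2 / l2 z0) \<longrightarrow>
            Lnorm F l1 l2 k1 k2 z \<le>
              p0 / (fact k10 * fact k20) *
              (cmod (pderiv2 F k10 k20 z0) / (l1 z0 ^ k10 * l2 z0 ^ k20))))"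
      by (rule necessity)
  next
    assume "\<exists>r1 r2 (n0::nat) p0. 0 < r1 \<and> r1 \<le> \<beta> \<and> 0 < r2 \<and> r2 \<le> \<beta> \<and> p0 > 1 \<and>
      (\<forall>z0\<in>bidisc. \<exists>k10 k20. k10 + k20 \<le> n0 \<and>
         (\<forall>k1 k2 z. k1 + k2 \<le> n0 \<and> z \<in> cpolydisc z0 (r1 / l1 z0, r2 / l2 z0) \<longrightarrow>
            Lnorm F l1 l2 k1 k2 z \<le>
              p0 / (fact k10 * fact k20) *
              (cmod (pderiv2 F k10 k20 z0) / (l1 z0 ^ k10 * l2 z0 ^ k20))))"
    then obtain r1 r2 n0 p0 where "0 < r1" "r1 \<le> \<beta>" "0 < r2" "r2 \<le> \<beta>" "p0 > 1"
      "\<forall>z0\<in>bidisc. \<exists>k10 k20. k10 + k20 \<le> n0 \<and>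
         (\<forall>k1 k2 z. k1 + k2 \<le> n0 \<and> z \<in> cpolydisc z0 (r1 / l1 z0, r2 / l2 z0) \<longrightarrow>
            Lnorm F l1 l2 k1 k2 z \<le>
              p0 / (fact k10 * fact k20) *
              (cmod (pderiv2 F k10 k20 z0) / (l1 z0 ^ k10 * l2 z0 ^ k20)))" by blast
    thus "bounded_L_index_joint F l1 l2" by (rule sufficiency)
  qed
qed

end
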